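(* Let $X$ be any topological space. Every prime ideal of $B_1(X)$ is contained in a unique maximal ideal of $B_1(X)$; that is, $B_1(X)$ is a Gelfand ring.
   Context: For a topological space $X$, $B_1(X)$ denotes the commutative ring with unity (pointwise operations) of all Baire one functions $f:X\to\mathbb{R}$, i.e. pointwise limits of sequences of continuous real-valued functions on $X$. *)

theory Defs
  imports "HOL-Analysis.Analysis" "HOL-Algebra.Ideal"
begin

text \<open>Functions are normalised to be 0 outside topspace X (extensional representation).\<close>

definition baire_one :: "'a topology \<Rightarrow> ('a \<Rightarrow> real) set" where
  "baire_one X = {f. (\<forall>x. x \<notin> topspace X \<longrightarrow> f x = 0) \<and>
     (\<exists>g::nat \<Rightarrow> 'a \<Rightarrow> real. (\<forall>n. continuous_map X euclideanreal (g n)) \<and>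
        (\<forall>x\<in>topspace X. LIMSEQ (\<lambda>n. g n x) (f x)))}"

definition B1_ring :: "'a topology \<Rightarrow> ('a \<Rightarrow> real) ring" where
  "B1_ring X = \<lparr> carrier = baire_one X,
                 mult = (\<lambda>f g x. f x * g x),
                 one = (\<lambda>x. if x \<in> topspace X then 1 else 0),
                 zero = (\<lambda>x. 0),
                 add = (\<lambda>f g x. f x + g x) \<rparr>"

end

theory Submission
  imports Defs
begin

lemma (in cring) union_chain_ideal:
  assumes ch: "subset.chain A C" and ne: "C \<noteq> {}"
    and A: "\<And>J. J \<in> A \<Longrightarrow> ideal J R"
  shows "ideal (\<Union>C) R"
proof -
  have CI: "\<And>J. J \<in> C \<Longrightarrow> ideal J R" using ch A unfolding subset.chain_def by blast
  have cmp: "\<And>I J. I \<in> C \<Longrightarrow> J \<in> C \<Longrightarrow> I \<subseteq> J \<or> J \<subseteq> I"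
    using ch unfolding subset.chain_def by blast
  have "x \<oplus> y \<in> \<Union>C" if xy: "x \<in> \<Union>C" "y \<in> \<Union>C" for x y
  proof -
    obtain I J where IJ: "I \<in> C" "J \<in> C" "x \<in> I" "y \<in> J" using xy by blast
    show ?thesis
    proof (cases "I \<subseteq> J")
      case True
      interpret ideal J R by (rule CI[OF IJ(2)])
      show ?thesis using True IJ by blast
    next
      case False
      then have "J \<subseteq> I" using cmp IJ by blast
      interpret ideal I R by (rule CI[OF IJ(1)])
      show ?thesis using \<open>J \<subseteq> I\<close> IJ by blast
    qed
  qed
  moreover have "\<zero> \<in> \<Union>C"
    using ne CI additive_subgroup.zero_closed ideal.axioms(1) by blast
  moreover have "\<ominus> x \<in> \<Union>C" if xC: "x \<in> \<Union>C" for x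
  proof -
    obtain J where J: "J \<in> C" "x \<in> J" using xC by blast
    interpret ideal J R by (rule CI[OF J(1)])
    show ?thesis using J by blast
  qed
  moreover have "y \<otimes> x \<in> \<Union>C" "x \<otimes> y \<in> \<Union>C"
    if xC: "x \<in> \<Union>C" and ycarr: "y \<in> carrier R" for x y
  proof -
    obtain J where J: "J \<in> C" "x \<in> J" using xC by blast
    interpret ideal J R by (rule CI[OF J(1)])
    show "y \<otimes> x \<in> \<Union>C" "x \<otimes> y \<in> \<Union>C" using I_l_closed I_r_closed J ycarr by blast+
  qed
  moreover have "x \<in> carrier R" if xC: "x \<in> \<Union>C" for x
  proof -
    obtain J where J: "J \<in> C" "x \<in> J" using xC by blast
    interpret ideal J R by (rule CI[OF J(1)])
    show ?thesis using J a_subset by blast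
  qed
  ultimately have cr: "\<And>x J. x \<in> J \<Longrightarrow> J \<in> C \<Longrightarrow> x \<in> carrier R"
    and "\<And>x y. x \<in> \<Union>C \<Longrightarrow> y \<in> \<Union>C \<Longrightarrow> x \<oplus> y \<in> \<Union>C"
    and "\<zero> \<in> \<Union>C"
    and "\<And>x. x \<in> \<Union>C \<Longrightarrow> \<ominus> x \<in> \<Union>C"
    and "\<And>x y. x \<in> \<Union>C \<Longrightarrow> y \<in> carrier R \<Longrightarrow> y \<otimes> x \<in> \<Union>C"
    and "\<And>x y. x \<in> \<Union>C \<Longrightarrow> y \<in> carrier R \<Longrightarrow> x \<otimes> y \<in> \<Union>C"
    by blast+
  then show ?thesis
    by unfold_locales (auto simp flip: a_inv_def intro: cr)
qed

lemma (in cring) krull: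
  assumes "ideal I R" "I \<noteq> carrier R"
  shows "\<exists>M. maximalideal M R \<and> I \<subseteq> M"
proof -
  define A where "A = {J. ideal J R \<and> I \<subseteq> J \<and> \<one> \<notin> J}"
  have "I \<in> A" using assms ideal.one_imp_carrier unfolding A_def by blast
  then have "A \<noteq> {}" by blast
  moreover have "\<Union>C \<in> A" if "C \<noteq> {}" "subset.chain A C" for C
  proof -
    have "ideal (\<Union>C) R" by (rule union_chain_ideal[OF that(2,1)]) (auto simp: A_def)
    moreover have "C \<subseteq> A" using that(2) unfolding subset.chain_def by blast
    ultimately show ?thesis using that(1) unfolding A_def by blast
  qed
  ultimately obtain M where M: "M \<in> A" "\<forall>X\<in>A. M \<subseteq> X \<longrightarrow> X = M"
    using subset_Zorn_nonempty[of A] by blast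
  have "maximalideal M R"
  proof (rule maximalidealI)
    show "ideal M R" using M unfolding A_def by blast
    show "carrier R \<noteq> M" using M unfolding A_def by blast
    fix J assume J: "ideal J R" "M \<subseteq> J" "J \<subseteq> carrier R"
    show "J = M \<or> J = carrier R"
    proof (cases "\<one> \<in> J")
      case True then show ?thesis using J ideal.one_imp_carrier by blast
    next
      case False
      then have "J \<in> A" using J M unfolding A_def by blast
      then show ?thesis using M J by blast
    qed
  qed
  then show ?thesis using M unfolding A_def by blast
qed

lemma baire_comp:
  assumes u: "u \<in> baire_one X" and phi: "continuous_on UNIV \<phi>"
  shows "(\<lambda>x. if x \<in> topspace X then \<phi> (u x) else 0) \<in> baire_one X"
proof -
  obtain g where g: "\<And>n. continuous_map X euclideanreal (g n)"
    "\<And>x. x \<in> topspace X \<Longrightarrow> (\<lambda>n. g n x) \<longlonglongrightarrow> u x"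
    using u unfolding baire_one_def by blast
  have "continuous_map X euclideanreal (\<phi> \<circ> g n)" for n
    using continuous_map_compose[OF g(1)] phi
    by (metis continuous_map_iff_continuous2 continuous_on_subset subset_UNIV)
  moreover have "(\<lambda>n. (\<phi> \<circ> g n) x) \<longlonglongrightarrow> \<phi> (u x)" if "x \<in> topspace X" for x
    using continuous_on_tendsto_compose[OF phi g(2)[OF that]] that by (simp add: o_def)
  ultimately show ?thesis unfolding baire_one_def
    by (intro CollectI conjI exI[of _ "\<lambda>n. \<phi> \<circ> g n"]) auto
qed

lemma num_ineq:
  fixes u :: real shows "u * u + max 0 (1/3 - u) \<ge> 1/9"
proof (cases "u \<le> 1/3")
  case True
  have "(1/3 - u) * (2/3 - u) \<ge> 0" using True by (intro mult_nonneg_nonneg) auto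
  moreover have "(1/3 - u) * (2/3 - u) = u*u - u + 2/9" by (simp add: field_simps)
  ultimately show ?thesis using True by (simp add: max_def)
next
  case False
  then have "u * u \<ge> (1/3) * (1/3)" by (intro mult_mono) auto
  moreover have "max 0 (1/3 - u) \<ge> 0" by simp
  ultimately show ?thesis by linarith
qed

lemma key:
  assumes M: "maximalideal M (B1_ring X)" and uM: "u \<in> M"
    and fM: "(\<lambda>x. if x \<in> topspace X then max 0 (1/3 - u x) else 0) \<in> M"
  shows False
proof -
  let ?R = "B1_ring X"
  interpret maximalideal M ?R by (rule M)
  let ?f = "(\<lambda>x. if x \<in> topspace X then max 0 (1/3 - u x) else 0)"
  have uc: "u \<in> carrier ?R" using uM a_subset by blast
  have "u \<otimes>\<^bsub>?R\<^esub> u \<in> M" using I_l_closed uc uM by blast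
  then have hM: "(u \<otimes>\<^bsub>?R\<^esub> u) \<oplus>\<^bsub>?R\<^esub> ?f \<in> M" using fM by (meson is_ideal ideal.axioms(1) additive_subgroup.a_closed)
  define h where "h = (u \<otimes>\<^bsub>?R\<^esub> u) \<oplus>\<^bsub>?R\<^esub> ?f"
  have hc: "h \<in> baire_one X" using hM a_subset unfolding h_def by (auto simp: B1_ring_def)
  have h0: "h x = 0" if "x \<notin> topspace X" for x
    using hc that unfolding baire_one_def by blast
  have hge: "h x \<ge> 1/9" if "x \<in> topspace X" for x
    using that num_ineq[of "u x"] unfolding h_def by (simp add: B1_ring_def)
  define k where "k = (\<lambda>x. if x \<in> topspace X then (\<lambda>t. 1 / max t (1/9)) (h x) else 0)"
  have "continuous_on UNIV (\<lambda>t::real. 1 / max t (1/9))"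
    by (intro continuous_intros) auto
  then have kc: "k \<in> carrier ?R" unfolding k_def using baire_comp[OF hc] by (simp add: B1_ring_def)
  have "k \<otimes>\<^bsub>?R\<^esub> h \<in> M" using I_l_closed kc hM unfolding h_def by blast
  moreover have "k \<otimes>\<^bsub>?R\<^esub> h = \<one>\<^bsub>?R\<^esub>"
  proof
    fix x show "(k \<otimes>\<^bsub>?R\<^esub> h) x = \<one>\<^bsub>?R\<^esub> x"
      using hge[of x] h0[of x] unfolding k_def by (auto simp: B1_ring_def max_def)
  qed
  ultimately have "\<one>\<^bsub>?R\<^esub> \<in> M" by simp
  then have "M = carrier ?R" by (rule one_imp_carrier)
  then show False using I_notcarr by simp
qed

theorem theorem2p17:
  fixes X :: "'a topology"
  shows "\<forall>P. primeideal P (B1_ring X) \<longrightarrow>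
           (\<exists>!M. maximalideal M (B1_ring X) \<and> P \<subseteq> M)"
proof (intro allI impI)
  fix P assume Pp: "primeideal P (B1_ring X)"
  let ?R = "B1_ring X"
  interpret primeideal P ?R by (rule Pp)
  obtain M where M: "maximalideal M ?R" "P \<subseteq> M"
    using krull[OF is_ideal] I_notcarr by metis
  moreover have "M1 = M2" if M1: "maximalideal M1 ?R" "P \<subseteq> M1"
    and M2: "maximalideal M2 ?R" "P \<subseteq> M2" for M1 M2
  proof (rule ccontr)
    assume ne: "M1 \<noteq> M2"
    have i1: "ideal M1 ?R" "ideal M2 ?R" using M1 M2 maximalideal.axioms(1) by blast+
    have S: "ideal (M1 <+>\<^bsub>?R\<^esub> M2) ?R" by (rule add_ideals[OF i1])
    have sub1: "M1 \<subseteq> M1 <+>\<^bsub>?R\<^esub> M2"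
    proof
      fix m assume "m \<in> M1"
      then have "m = m \<oplus>\<^bsub>?R\<^esub> \<zero>\<^bsub>?R\<^esub>" "m \<in> carrier ?R"
        using i1(1) ideal.Icarr by (metis r_zero)+
      moreover have "\<zero>\<^bsub>?R\<^esub> \<in> M2" using i1(2) additive_subgroup.zero_closed ideal.axioms(1) by blast
      ultimately show "m \<in> M1 <+>\<^bsub>?R\<^esub> M2" using \<open>m \<in> M1\<close> unfolding set_add_def' by blast
    qed
    have sub2: "M2 \<subseteq> M1 <+>\<^bsub>?R\<^esub> M2"
    proof
      fix m assume "m \<in> M2"
      then have "m = \<zero>\<^bsub>?R\<^esub> \<oplus>\<^bsub>?R\<^esub> m" "m \<in> carrier ?R"
        using i1(2) ideal.Icarr by (metis l_zero)+
      moreover have "\<zero>\<^bsub>?R\<^esub> \<in> M1" using i1(1) additive_subgroup.zero_closed ideal.axioms(1) by blast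
      ultimately show "m \<in> M1 <+>\<^bsub>?R\<^esub> M2" using \<open>m \<in> M2\<close> unfolding set_add_def' by blast
    qed
    have "M1 <+>\<^bsub>?R\<^esub> M2 \<subseteq> carrier ?R" using S ideal.axioms(1) additive_subgroup.a_subset by blast
    then have "M1 <+>\<^bsub>?R\<^esub> M2 = M1 \<or> M1 <+>\<^bsub>?R\<^esub> M2 = carrier ?R"
      using maximalideal.I_maximal[OF M1(1) S sub1] by blast
    moreover have "M1 <+>\<^bsub>?R\<^esub> M2 \<noteq> M1"
    proof
      assume "M1 <+>\<^bsub>?R\<^esub> M2 = M1"
      then have "M2 \<subseteq> M1" using sub2 by blast
      then have "M1 = M2 \<or> M1 = carrier ?R"
        using maximalideal.I_maximal[OF M2(1) i1(1)] i1(1) ideal.axioms(1) additive_subgroup.a_subset by blast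
      then show False using ne maximalideal.I_notcarr[OF M1(1)] by auto
    qed
    ultimately have "\<one>\<^bsub>?R\<^esub> \<in> M1 <+>\<^bsub>?R\<^esub> M2" by simp
    then obtain u v where uv: "u \<in> M1" "v \<in> M2" "\<one>\<^bsub>?R\<^esub> = u \<oplus>\<^bsub>?R\<^esub> v"
      unfolding set_add_def' by blast
    have sumx: "u x + v x = 1" if "x \<in> topspace X" for x
      using fun_cong[OF uv(3), of x] that by (simp add: B1_ring_def)
    have uc: "u \<in> baire_one X" "v \<in> baire_one X"
      using uv i1 ideal.Icarr by (fastforce simp: B1_ring_def)+
    define f where "f = (\<lambda>x. if x \<in> topspace X then max 0 (1/3 - u x) else 0)"
    define g where "g = (\<lambda>x. if x \<in> topspace X then max 0 (1/3 - v x) else 0)"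
    have cont: "continuous_on UNIV (\<lambda>t::real. max 0 (1/3 - t))"
      by (intro continuous_intros)
    have fc: "f \<in> carrier ?R" "g \<in> carrier ?R"
      unfolding f_def g_def using baire_comp[OF uc(1) cont] baire_comp[OF uc(2) cont]
      by (simp_all add: B1_ring_def)
    have "f \<otimes>\<^bsub>?R\<^esub> g = \<zero>\<^bsub>?R\<^esub>"
    proof
      fix x show "(f \<otimes>\<^bsub>?R\<^esub> g) x = \<zero>\<^bsub>?R\<^esub> x"
        using sumx[of x] unfolding f_def g_def by (auto simp: B1_ring_def max_def)
    qed
    then have "f \<otimes>\<^bsub>?R\<^esub> g \<in> P" by simp
    then have "f \<in> P \<or> g \<in> P" using I_prime fc by blast
    then show False
    proof
      assume "f \<in> P" then show False using key[OF M1(1) uv(1)] M1(2) unfolding f_def by blast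
    next
      assume "g \<in> P" then show False using key[OF M2(1) uv(2)] M2(2) unfolding g_def by blast
    qed
  qed
  ultimately show "\<exists>!M. maximalideal M ?R \<and> P \<subseteq> M" by blast
qed

end
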